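(* Let $C_2\subseteq C_1\subseteq\mathbb{F}_2^n$ be linear codes, $Q=Q(C_1,C_2)$ the corresponding CSS code, and $N=2^\ell$ with $\ell$ a positive integer. If $(1,\ldots,1)\in H_N$, then $C_2\subseteq (C_1^{\ell-1})^{\perp}$.
   Context: $\omega=e^{2\pi\mathbf{i}/N}$, $U(a)=\mathrm{diag}(1,\omega^a)$ for $a\in\mathbb{Z}_N$, $U(b)=\bigotimes_{i=1}^nU(b_i)$ for $b\in\mathbb{Z}_N^n$. $Q(C_1,C_2)$ is the subspace of $(\mathbb{C}^2)^{\otimes n}$ stabilized by all $X(u)Z(v)$, $u\in C_2$, $v\in C_1^\perp$ (Pauli operators $X(u)=\bigotimes X^{u_i}$, $Z(v)=\bigotimes Z^{v_i}$). $H_N=\{b\in\mathbb{Z}_N^n: U(b)Q=Q\}$. For $r\ge1$, $C_1^r=C_1\star\cdots\star C_1$ ($r$ times) is the $\mathbb{F}_2$-linear span of the componentwise products $c_1\star\cdots\star c_r$ with $c_i\in C_1$, and $C_1^0$ is the span of $(1,\ldots,1)$; $\perp$ is the dual over $\mathbb{F}_2$ with respect to the standard dot product. *)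

theory Defs
  imports Complex_Main
begin

text \<open>Binary vectors of length n: functions nat => bool vanishing outside {0..<n}.
  Addition in F_2^n is pointwise xor, componentwise product is pointwise conjunction.\<close>

definition bvec :: "nat \<Rightarrow> (nat \<Rightarrow> bool) set" where
  "bvec n = {x. \<forall>i\<ge>n. \<not> x i}"

definition badd :: "(nat \<Rightarrow> bool) \<Rightarrow> (nat \<Rightarrow> bool) \<Rightarrow> (nat \<Rightarrow> bool)" where
  "badd x y = (\<lambda>i. x i \<noteq> y i)"

definition linear_code :: "nat \<Rightarrow> (nat \<Rightarrow> bool) set \<Rightarrow> bool" where
  "linear_code n C \<longleftrightarrow> C \<subseteq> bvec n \<and> (\<lambda>i. False) \<in> C \<and>
     (\<forall>x\<in>C. \<forall>y\<in>C. badd x y \<in> C)"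

definition bdot :: "nat \<Rightarrow> (nat \<Rightarrow> bool) \<Rightarrow> (nat \<Rightarrow> bool) \<Rightarrow> nat" where
  "bdot n x y = card {i. i < n \<and> x i \<and> y i} mod 2"

definition dual_code :: "nat \<Rightarrow> (nat \<Rightarrow> bool) set \<Rightarrow> (nat \<Rightarrow> bool) set" where
  "dual_code n C = {x \<in> bvec n. \<forall>c\<in>C. bdot n x c = 0}"

definition fspan :: "nat \<Rightarrow> (nat \<Rightarrow> bool) set \<Rightarrow> (nat \<Rightarrow> bool) set" where
  "fspan n S = \<Inter>{D. linear_code n D \<and> S \<subseteq> D}"

definition all_ones :: "nat \<Rightarrow> (nat \<Rightarrow> bool)" where
  "all_ones n = (\<lambda>i. i < n)"

definition star_power :: "nat \<Rightarrow> (nat \<Rightarrow> bool) set \<Rightarrow> nat \<Rightarrow> (nat \<Rightarrow> bool) set" where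
  "star_power n C r =
     (if r = 0 then fspan n {all_ones n}
      else fspan n {x. \<exists>c :: nat \<Rightarrow> (nat \<Rightarrow> bool). (\<forall>j<r. c j \<in> C) \<and>
                        x = (\<lambda>i. i < n \<and> (\<forall>j<r. c j i))})"

text \<open>States of (C^2)^{\<otimes> n}: amplitude functions on computational basis vectors in F_2^n,
  zero outside bvec n.\<close>
type_synonym state = "(nat \<Rightarrow> bool) \<Rightarrow> complex"

definition states :: "nat \<Rightarrow> state set" where
  "states n = {\<psi>. \<forall>x. x \<notin> bvec n \<longrightarrow> \<psi> x = 0}"

text \<open>X(u) |x> = |x+u>, Z(v) |x> = (-1)^{v.x} |x>.\<close>
definition Xop :: "(nat \<Rightarrow> bool) \<Rightarrow> state \<Rightarrow> state" where
  "Xop u \<psi> = (\<lambda>x. \<psi> (badd x u))"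

definition Zop :: "nat \<Rightarrow> (nat \<Rightarrow> bool) \<Rightarrow> state \<Rightarrow> state" where
  "Zop n v \<psi> = (\<lambda>x. (-1) ^ bdot n v x * \<psi> x)"

definition CSS :: "nat \<Rightarrow> (nat \<Rightarrow> bool) set \<Rightarrow> (nat \<Rightarrow> bool) set \<Rightarrow> state set" where
  "CSS n C1 C2 = {\<psi> \<in> states n. \<forall>u\<in>C2. \<forall>v\<in>dual_code n C1. Xop u (Zop n v \<psi>) = \<psi>}"

definition omega :: "nat \<Rightarrow> complex" where
  "omega N = exp (2 * pi * \<i> / of_nat N)"

text \<open>U(b) = tensor of diag(1, omega^{b_i}): U(b)|x> = omega^{sum_i b_i x_i} |x>.
  Elements of Z_N are represented by integers in {0..<N}.\<close>
definition Uop :: "nat \<Rightarrow> nat \<Rightarrow> (nat \<Rightarrow> int) \<Rightarrow> state \<Rightarrow> state" where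
  "Uop n N b \<psi> = (\<lambda>x. omega N powi (\<Sum>i<n. (if x i then b i else 0)) * \<psi> x)"

definition HN :: "nat \<Rightarrow> nat \<Rightarrow> (nat \<Rightarrow> bool) set \<Rightarrow> (nat \<Rightarrow> bool) set \<Rightarrow> (nat \<Rightarrow> int) set" where
  "HN n N C1 C2 = {b. (\<forall>i<n. 0 \<le> b i \<and> b i < int N) \<and> (\<forall>i\<ge>n. b i = 0) \<and>
                    Uop n N b ` CSS n C1 C2 = CSS n C1 C2}"

definition ones_Z :: "nat \<Rightarrow> (nat \<Rightarrow> int)" where
  "ones_Z n = (\<lambda>i. if i < n then 1 else 0)"

end

theory Submission
  imports Defs "HOL-Analysis.Analysis"
begin

lemma omega_pow_eq:
  assumes "N \<ge> 1" "omega N ^ a = omega N ^ b"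
  shows "int N dvd int a - int b"
proof -
  have e: "omega N ^ j = exp(2 * of_real pi * \<i> * of_nat j / of_nat N)" for j
    unfolding omega_def exp_of_nat_mult[symmetric] by (simp add: field_simps)
  have "a mod N = b mod N" using assms complex_root_unity_eq[of N a b] e by simp
  then have "int a mod int N = int b mod int N" by (metis zmod_int)
  then show ?thesis by (simp add: mod_eq_dvd_iff)
qed

definition wt :: "nat \<Rightarrow> (nat \<Rightarrow> bool) \<Rightarrow> int" where
  "wt n w = int (card {i. i < n \<and> w i})"

definition band :: "(nat \<Rightarrow> bool) \<Rightarrow> (nat \<Rightarrow> bool) \<Rightarrow> (nat \<Rightarrow> bool)" where
  "band a b = (\<lambda>i. a i \<and> b i)"

lemma wt_badd: "wt n (badd a b) = wt n a + wt n b - 2 * wt n (band a b)"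
proof -
  let ?A = "{i. i < n \<and> a i}" and ?B = "{i. i < n \<and> b i}"
  have fA: "finite ?A" "finite ?B" by auto
  have s: "{i. i < n \<and> badd a b i} = (?A - ?B) \<union> (?B - ?A)" by (auto simp: badd_def)
  have i: "{i. i < n \<and> band a b i} = ?A \<inter> ?B" by (auto simp: band_def)
  have c1: "card ((?A - ?B) \<union> (?B - ?A)) = card (?A - ?B) + card (?B - ?A)"
    by (rule card_Un_disjoint) auto
  have c2: "card (?A - ?B) + card (?A \<inter> ?B) = card ?A"
  proof -
    have "card ((?A - ?B) \<union> (?A \<inter> ?B)) = card (?A - ?B) + card (?A \<inter> ?B)"
      by (rule card_Un_disjoint) auto
    moreover have "(?A - ?B) \<union> (?A \<inter> ?B) = ?A" by blast
    ultimately show ?thesis by simp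
  qed
  have c3: "card (?B - ?A) + card (?A \<inter> ?B) = card ?B"
  proof -
    have "card ((?B - ?A) \<union> (?A \<inter> ?B)) = card (?B - ?A) + card (?A \<inter> ?B)"
      by (rule card_Un_disjoint) auto
    moreover have "(?B - ?A) \<union> (?A \<inter> ?B) = ?B" by blast
    ultimately show ?thesis by simp
  qed
  show ?thesis unfolding wt_def s i using c1 c2 c3 by simp
qed

definition BB :: "nat \<Rightarrow> (nat \<Rightarrow> bool) set \<Rightarrow> nat \<Rightarrow> (nat \<Rightarrow> bool) \<Rightarrow> bool" where
  "BB n C k w \<longleftrightarrow> (2::int)^(k+1) dvd wt n w \<and> (\<forall>x\<in>C. (2::int)^k dvd wt n (band w x))"

lemma BB_step:
  assumes lc: "linear_code n C" and B: "BB n C (Suc k) w" and c: "c \<in> C"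
  shows "BB n C k (band w c)"
proof -
  have p1: "(2::int)^(k+1) dvd wt n (band w c)" using B c by (simp add: BB_def)
  have p2: "(2::int)^k dvd wt n (band (band w c) x)" if x: "x \<in> C" for x
  proof -
    have cx: "badd c x \<in> C" using lc c x by (simp add: linear_code_def)
    have d1: "(2::int)^(k+1) dvd wt n (band w (badd c x))" using B cx by (simp add: BB_def)
    have d2: "(2::int)^(k+1) dvd wt n (band w x)" using B x by (simp add: BB_def)
    have eq1: "band w (badd c x) = badd (band w c) (band w x)"
      by (auto simp: band_def badd_def)
    have eq2: "band (band w c) (band w x) = band (band w c) x"
      by (auto simp: band_def)
    have "2 * wt n (band (band w c) x) = wt n (band w c) + wt n (band w x) - wt n (band w (badd c x))"
      using wt_badd[of n "band w c" "band w x"] eq1 eq2 by simp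
    then have "(2::int)^(k+1) dvd 2 * wt n (band (band w c) x)"
      using p1 d1 d2 by simp
    then show ?thesis by simp
  qed
  show ?thesis using p1 p2 by (simp add: BB_def)
qed

lemma BB_main:
  assumes lc: "linear_code n C"
  shows "BB n C k w \<Longrightarrow> (\<forall>j<k. c j \<in> C) \<Longrightarrow>
     (2::int) dvd wt n (\<lambda>i. w i \<and> (\<forall>j<k. c j i))"
proof (induction k arbitrary: w)
  case 0
  then show ?case by (simp add: BB_def)
next
  case (Suc k)
  have B: "BB n C k (band w (c k))" using BB_step[OF lc Suc.prems(1)] Suc.prems(2) by simp
  have "(\<lambda>i. w i \<and> (\<forall>j<Suc k. c j i)) = (\<lambda>i. band w (c k) i \<and> (\<forall>j<k. c j i))"
    by (auto simp: band_def less_Suc_eq)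
  then show ?case using Suc.IH[OF B] Suc.prems(2) by simp
qed

lemma bdot_wt: "int (bdot n a b) = wt n (band a b) mod 2"
  unfolding bdot_def wt_def band_def by (simp add: zmod_int)

lemma sum_wt: "(\<Sum>i<n. (if x i then ones_Z n i else 0)) = wt n x"
proof -
  have "(\<Sum>i<n. (if x i then ones_Z n i else 0)) = (\<Sum>i\<in>{..<n} \<inter> {i. x i}. (1::int))"
    by (simp add: ones_Z_def sum.If_cases)
  also have "{..<n} \<inter> {i. x i} = {i. i < n \<and> x i}" by auto
  finally show ?thesis by (simp add: wt_def)
qed

theorem corollary3p4:
  fixes n l N :: nat and C1 C2 :: "(nat \<Rightarrow> bool) set"
  assumes "linear_code n C1" and "linear_code n C2" and "C2 \<subseteq> C1"
    and "l > 0" and "N = 2 ^ l"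
    and "ones_Z n \<in> HN n N C1 C2"
  shows "C2 \<subseteq> dual_code n (star_power n C1 (l - 1))"
proof -
  note lc1 = assms(1) and lc2 = assms(2) and sub = assms(3)
  have N1: "N \<ge> 1" using assms(5) by simp
  have img: "Uop n N (ones_Z n) ` CSS n C1 C2 \<subseteq> CSS n C1 C2"
    using assms(6) by (simp add: HN_def)
  have bb: "badd (badd y u) u = y" for y u by (auto simp: badd_def)
  have cl1: "badd a b \<in> C1" if "a \<in> C1" "b \<in> C1" for a b
    using lc1 that unfolding linear_code_def by blast
  have cl2: "badd a b \<in> C2" if "a \<in> C2" "b \<in> C2" for a b
    using lc2 that unfolding linear_code_def by blast
  have sb2: "C2 \<subseteq> bvec n" using lc2 unfolding linear_code_def by blast
  have sb1: "C1 \<subseteq> bvec n" using lc1 unfolding linear_code_def by blast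
  have z2: "(\<lambda>i. False) \<in> C2" using lc2 unfolding linear_code_def by blast
  have zdual: "(\<lambda>i. False) \<in> dual_code n C1"
    by (simp add: dual_code_def bvec_def bdot_def)
  have key: "int N dvd wt n (badd x0 u) - wt n x0" if x0: "x0 \<in> C1" and u: "u \<in> C2" for x0 u
  proof -
    define \<psi> where "\<psi> = (\<lambda>x. if badd x x0 \<in> C2 then (1::complex) else 0)"
    have x0b: "x0 \<in> bvec n" using x0 sb1 by blast
    have st: "\<psi> \<in> states n"
    proof -
      have "badd x x0 \<notin> C2" if "x \<notin> bvec n" for x
      proof
        assume "badd x x0 \<in> C2"
        then have "badd x x0 \<in> bvec n" using sb2 by blast
        then show False using that x0b by (auto simp: bvec_def badd_def)
      qed
      then show ?thesis by (auto simp: states_def \<psi>_def)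
    qed
    have Z: "Zop n v \<psi> = \<psi>" if v: "v \<in> dual_code n C1" for v
    proof
      fix x
      show "Zop n v \<psi> x = \<psi> x"
      proof (cases "badd x x0 \<in> C2")
        case True
        then have "badd (badd x x0) x0 \<in> C1" using sub x0 cl1 by blast
        then have "x \<in> C1" using bb by simp
        then have "bdot n v x = 0" using v by (simp add: dual_code_def)
        then show ?thesis by (simp add: Zop_def)
      next
        case False
        then show ?thesis by (simp add: Zop_def \<psi>_def)
      qed
    qed
    have X: "Xop u' \<psi> = \<psi>" if u': "u' \<in> C2" for u'
    proof
      fix x
      have e: "badd (badd x u') x0 = badd (badd x x0) u'" by (auto simp: badd_def)
      have "badd (badd x u') x0 \<in> C2 \<longleftrightarrow> badd x x0 \<in> C2"
      proof
        assume "badd (badd x u') x0 \<in> C2"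
        then have "badd (badd (badd x x0) u') u' \<in> C2" using e u' cl2 by metis
        then show "badd x x0 \<in> C2" using bb by simp
      next
        assume "badd x x0 \<in> C2"
        then show "badd (badd x u') x0 \<in> C2" using e u' cl2 by metis
      qed
      then show "Xop u' \<psi> x = \<psi> x" by (simp add: Xop_def \<psi>_def)
    qed
    have inQ: "\<psi> \<in> CSS n C1 C2" using st Z X by (simp add: CSS_def)
    define \<phi> where "\<phi> = Uop n N (ones_Z n) \<psi>"
    have "\<phi> \<in> CSS n C1 C2" using img inQ unfolding \<phi>_def by blast
    then have "Xop u (Zop n (\<lambda>i. False) \<phi>) = \<phi>" using u zdual by (simp add: CSS_def)
    moreover have "Zop n (\<lambda>i. False) \<phi> = \<phi>" by (simp add: Zop_def bdot_def)
    ultimately have "Xop u \<phi> = \<phi>" by simp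
    then have "Xop u \<phi> x0 = \<phi> x0" by simp
    then have "\<phi> (badd x0 u) = \<phi> x0" by (simp only: Xop_def)
    moreover have "\<psi> x0 = 1"
    proof -
      have "badd x0 x0 = (\<lambda>i. False)" by (auto simp: badd_def)
      then show ?thesis using z2 by (simp add: \<psi>_def)
    qed
    moreover have "\<psi> (badd x0 u) = 1"
    proof -
      have "badd (badd x0 u) x0 = u" by (auto simp: badd_def)
      then show ?thesis using u by (simp add: \<psi>_def)
    qed
    moreover have "\<phi> x = omega N powi wt n x * \<psi> x" for x
      unfolding \<phi>_def Uop_def sum_wt ..
    ultimately have "omega N powi wt n (badd x0 u) = omega N powi wt n x0"
      by (metis mult_1_right)
    then have "omega N ^ card {i. i < n \<and> badd x0 u i} = omega N ^ card {i. i < n \<and> x0 i}"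
      unfolding wt_def power_int_of_nat .
    from omega_pow_eq[OF N1 this] show ?thesis unfolding wt_def .
  qed
  show ?thesis
  proof
    fix u assume u: "u \<in> C2"
    have z1: "(\<lambda>i. False) \<in> C1" using lc1 by (simp add: linear_code_def)
    have w0: "wt n (\<lambda>i. False) = 0" by (simp add: wt_def)
    have bz: "badd (\<lambda>i. False) u = u" by (simp add: badd_def)
    have d1: "(2::int)^l dvd wt n u" using key[OF z1 u] assms(5) w0 bz by simp
    have ls: "(2::int)^l = 2 * 2^(l-1)"
    proof -
      have "l = Suc (l - 1)" using assms(4) by simp
      then show ?thesis by (metis power_Suc)
    qed
    have BBu: "BB n C1 (l - 1) u"
    proof -
      have "(2::int)^(l-1) dvd wt n (band u x)" if x: "x \<in> C1" for x
      proof -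
        have "int N dvd wt n u - 2 * wt n (band x u)" using key[OF x u] wt_badd[of n x u] by simp
        moreover have "int N = (2::int)^l" using assms(5) by simp
        ultimately have h: "(2::int)^l dvd wt n u - 2 * wt n (band x u)" by simp
        have "(2::int)^l dvd wt n u - (wt n u - 2 * wt n (band x u))"
          using dvd_diff[OF d1 h] .
        then have "(2::int)^l dvd 2 * wt n (band x u)" by simp
        moreover have "band x u = band u x" by (auto simp: band_def)
        ultimately have "2 * (2::int)^(l-1) dvd 2 * wt n (band u x)" using ls by metis
        then show ?thesis by (metis dvd_mult_cancel_left zero_neq_numeral)
      qed
      then show ?thesis using d1 assms(4) by (simp add: BB_def)
    qed
    have ub: "u \<in> bvec n" using u lc2 by (auto simp: linear_code_def)
    define D where "D = {x \<in> bvec n. bdot n u x = 0}"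
    have linD: "linear_code n D"
    proof -
      have "bdot n u (badd x y) = 0" if "bdot n u x = 0" "bdot n u y = 0" for x y
      proof -
        have "band u (badd x y) = badd (band u x) (band u y)" by (auto simp: band_def badd_def)
        then have "wt n (band u (badd x y)) = wt n (band u x) + wt n (band u y) - 2 * wt n (band (band u x) (band u y))"
          using wt_badd by simp
        moreover have "wt n (band u x) mod 2 = 0" "wt n (band u y) mod 2 = 0"
          using that bdot_wt[of n u x] bdot_wt[of n u y] by simp_all
        ultimately have "wt n (band u (badd x y)) mod 2 = 0" by presburger
        then show ?thesis using bdot_wt[of n u "badd x y"] by simp
      qed
      moreover have "badd x y \<in> bvec n" if "x \<in> bvec n" "y \<in> bvec n" for x y
        using that by (auto simp: bvec_def badd_def)
      moreover have "(\<lambda>i. False) \<in> D" by (simp add: D_def bvec_def bdot_def)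
      ultimately show ?thesis unfolding linear_code_def D_def by blast
    qed
    have SD: "star_power n C1 (l - 1) \<subseteq> D"
    proof (cases "l - 1 = 0")
      case True
      have "all_ones n \<in> D"
      proof -
        have "{i. i < n \<and> band u (all_ones n) i} = {i. i < n \<and> u i}" by (auto simp: band_def all_ones_def)
        then have "wt n (band u (all_ones n)) = wt n u" by (simp add: wt_def)
        moreover have "(2::int) dvd wt n u"
        proof -
          have "(2::int) dvd 2^l" using assms(4) by (simp add: dvd_power)
          then show ?thesis using d1 by (rule dvd_trans)
        qed
        ultimately show ?thesis using bdot_wt[of n u "all_ones n"]
          by (simp add: D_def bvec_def all_ones_def)
      qed
      then show ?thesis using True linD unfolding star_power_def fspan_def by auto
    next
      case False
      have "x \<in> D" if "\<forall>j<l-1. c j \<in> C1" "x = (\<lambda>i. i < n \<and> (\<forall>j<l-1. c j i))" for x c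
      proof -
        have "{i. i < n \<and> band u x i} = {i. i < n \<and> (u i \<and> (\<forall>j<l-1. c j i))}"
          using that(2) by (auto simp: band_def)
        then have "wt n (band u x) = wt n (\<lambda>i. u i \<and> (\<forall>j<l-1. c j i))" by (simp add: wt_def)
        moreover have "(2::int) dvd wt n (\<lambda>i. u i \<and> (\<forall>j<l-1. c j i))"
          using BB_main[OF lc1 BBu that(1)] .
        ultimately show ?thesis using bdot_wt[of n u x] that(2)
          by (simp add: D_def bvec_def)
      qed
      then show ?thesis using False linD unfolding star_power_def fspan_def by auto
    qed
    show "u \<in> dual_code n (star_power n C1 (l - 1))"
      using SD ub by (auto simp: dual_code_def D_def)
  qed
qed

end
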